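(* For every integer $m\ge3$, $\mathrm{sn}(\mathrm{SUD}_m)=\underline{\mathrm{lcs}}(\mathrm{SUD}_m)=m^4-3m^2+3m$.
   Context: $\mathrm{SUD}_m$ is the hypergraph whose vertex set is the $m^2\times m^2$ grid $[m^2]\times[m^2]$ and whose $3m^2$ hyperedges are the $m^2$ rows, the $m^2$ columns, and the $m^2$ disjoint $m\times m$ blocks (the sets $\{(a,b): \lceil a/m\rceil=i,\lceil b/m\rceil=j\}$ for $i,j\in[m]$). A (weak) colouring of a hypergraph with $k$ colours is a map from its vertex set to $[k]$ such that no hyperedge is monochromatic; $\chi$ is the least $k$ for which such a colouring exists (here $\chi(\mathrm{SUD}_m)=2$). For a $\chi$-colouring $c$, a vertex set $S$ is a determining set if no other $\chi$-colouring agrees with $c$ on $S$; a critical set is an inclusion-minimal determining set. $\mathrm{scs}(H,c)$ and $\mathrm{lcs}(H,c)$ are the sizes of a smallest resp. largest critical set for $(H,c)$; $\mathrm{sn}(H)=\min_c\mathrm{scs}(H,c)$ and $\underline{\mathrm{lcs}}(H)=\min_c\mathrm{lcs}(H,c)$, minima over all $\chi(H)$-colourings $c$. *)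

theory Defs
  imports Main
begin

text \<open>Colourings are compared on V only.\<close>

type_synonym 'a hypergraph = "'a set \<times> 'a set set"

definition is_colouring :: "'a hypergraph \<Rightarrow> nat \<Rightarrow> ('a \<Rightarrow> nat) \<Rightarrow> bool" where
  "is_colouring H k c \<longleftrightarrow>
     (\<forall>v\<in>fst H. c v \<in> {1..k}) \<and>
     (\<forall>e\<in>snd H. \<not> (\<exists>i. \<forall>v\<in>e. c v = i))"

definition chi :: "'a hypergraph \<Rightarrow> nat" where
  "chi H = (LEAST k. \<exists>c. is_colouring H k c)"

definition chi_colouring :: "'a hypergraph \<Rightarrow> ('a \<Rightarrow> nat) \<Rightarrow> bool" where
  "chi_colouring H c \<longleftrightarrow> is_colouring H (chi H) c"

definition determining_set :: "'a hypergraph \<Rightarrow> ('a \<Rightarrow> nat) \<Rightarrow> 'a set \<Rightarrow> bool" where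
  "determining_set H c S \<longleftrightarrow> S \<subseteq> fst H \<and>
     (\<forall>c'. chi_colouring H c' \<and> (\<forall>v\<in>S. c' v = c v) \<longrightarrow> (\<forall>v\<in>fst H. c' v = c v))"

definition critical_set :: "'a hypergraph \<Rightarrow> ('a \<Rightarrow> nat) \<Rightarrow> 'a set \<Rightarrow> bool" where
  "critical_set H c S \<longleftrightarrow> determining_set H c S \<and> (\<forall>T. T \<subset> S \<longrightarrow> \<not> determining_set H c T)"

definition scs :: "'a hypergraph \<Rightarrow> ('a \<Rightarrow> nat) \<Rightarrow> nat" where
  "scs H c = Min {card S | S. critical_set H c S}"

definition lcs :: "'a hypergraph \<Rightarrow> ('a \<Rightarrow> nat) \<Rightarrow> nat" where
  "lcs H c = Max {card S | S. critical_set H c S}"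

definition sn :: "'a hypergraph \<Rightarrow> nat" where
  "sn H = Min {scs H c | c. chi_colouring H c}"

definition lcs_lower :: "'a hypergraph \<Rightarrow> nat" where
  "lcs_lower H = Min {lcs H c | c. chi_colouring H c}"

definition SUD :: "nat \<Rightarrow> (nat \<times> nat) hypergraph" where
  "SUD m = ({1..m^2} \<times> {1..m^2},
     {{(a, b) | b. b \<in> {1..m^2}} | a. a \<in> {1..m^2}} \<union>
     {{(a, b) | a. a \<in> {1..m^2}} | b. b \<in> {1..m^2}} \<union>
     {{(a, b) | a b. a \<in> {1..m^2} \<and> b \<in> {1..m^2} \<and>
                     (a + m - 1) div m = i \<and> (b + m - 1) div m = j} | i j. i \<in> {1..m} \<and> j \<in> {1..m}})"

end

theory Submission
  imports Defs
begin

definition bl :: "nat \<Rightarrow> nat \<Rightarrow> nat" where "bl m x = (x + m - 1) div m"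

lemma div_iff: assumes "(m::nat) > 0" shows "(y div m = i) \<longleftrightarrow> (i*m \<le> y \<and> y < i*m + m)"
proof
  assume h: "y div m = i"
  have "i*m \<le> y" using div_times_less_eq_dividend[of y m] h by simp
  moreover have "i*m + y mod m = y" using div_mult_mod_eq[of y m] h by simp
  hence "y < i*m + m" using mod_less_divisor[OF assms, of y] by linarith
  ultimately show "i*m \<le> y \<and> y < i*m + m" by simp
next
  assume "i*m \<le> y \<and> y < i*m + m"
  thus "y div m = i" by (intro div_nat_eqI) (auto simp: mult.commute)
qed

lemma bl_iff: assumes "m > 0" "x \<ge> 1" shows "bl m x = i \<longleftrightarrow> (i*m < x + m \<and> x \<le> i*m)"
  unfolding bl_def div_iff[OF assms(1)] using assms by auto


lemma jm: "1 \<le> j \<Longrightarrow> (j-1)*m + m = j*(m::nat)"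
  by (cases j) auto

lemma bl_range: assumes "m > 0" "x \<in> {1..m^2}" shows "bl m x \<in> {1..m}"
proof -
  define i where "i = bl m x"
  have h: "i*m < x + m" "x \<le> i*m" using bl_iff[of m x i] assms i_def by auto
  have "i \<ge> 1" using h assms by (cases i) auto
  moreover have "i \<le> m"
  proof (rule ccontr)
    assume "\<not> i \<le> m"
    hence "(m+1)*m \<le> i*m" by (intro mult_le_mono) auto
    thus False using h assms by (auto simp: power2_eq_square algebra_simps)
  qed
  ultimately show ?thesis using i_def by auto
qed

lemma bl_loc: assumes "m > 0" "1 \<le> j" "1 \<le> k" "k \<le> m" shows "bl m ((j-1)*m + k) = j"
proof -
  have e: "(j-1)*m + m = j*m" using jm assms(2) by blast
  show ?thesis using assms e by (subst bl_iff) auto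
qed

lemma loc_range: assumes "(m::nat) > 0" "1 \<le> j" "j \<le> m" "1 \<le> k" "k \<le> m" shows "(j-1)*m + k \<in> {1..m^2}"
proof -
  have e: "(j-1)*m + m = j*m" using jm assms(2) by blast
  have "j*m \<le> m*m" using assms by auto
  moreover have "(j-1)*m + k \<le> j*m" using e assms by linarith
  ultimately have "(j-1)*m + k \<le> m*m" by linarith
  thus ?thesis using assms by (simp add: power2_eq_square)
qed

lemma bl_mult: assumes "m > 0" "1 \<le> j" shows "bl m (j*m) = j"
  using bl_loc[OF assms(1,2), of m] assms jm[OF assms(2), of m] by simp

lemma bl_dvd_inj: assumes "m > 0" "m dvd x" "m dvd y" "x \<ge> 1" "y \<ge> 1" "bl m x = bl m y" shows "x = y"
proof -
  obtain p q where pq: "x = p*m" "y = q*m" using assms(2,3) by (metis dvdE mult.commute)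
  moreover have "p \<ge> 1" "q \<ge> 1" using assms pq by (auto intro: Suc_leI simp: gr0I)
  ultimately show ?thesis using assms bl_mult by metis
qed

lemma not_dvd_loc: assumes "(m::nat) > 0" "1 \<le> k" "k < m" shows "\<not> m dvd ((j-1)*m + k)"
proof
  assume "m dvd ((j-1)*m + k)"
  hence "m dvd k" by (simp add: dvd_add_right_iff)
  thus False using assms by (auto dest: dvd_imp_le)
qed


definition rowE :: "nat \<Rightarrow> nat \<Rightarrow> (nat\<times>nat) set" where
  "rowE m a = {(a, b) | b. b \<in> {1..m^2}}"
definition colE :: "nat \<Rightarrow> nat \<Rightarrow> (nat\<times>nat) set" where
  "colE m b = {(a, b) | a. a \<in> {1..m^2}}"
definition blkE :: "nat \<Rightarrow> nat \<Rightarrow> nat \<Rightarrow> (nat\<times>nat) set" where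
  "blkE m i j = {(a, b) | a b. a \<in> {1..m^2} \<and> b \<in> {1..m^2} \<and> (a + m - 1) div m = i \<and> (b + m - 1) div m = j}"

lemma SUD_eq: "SUD m = ({1..m^2} \<times> {1..m^2},
   {rowE m a | a. a \<in> {1..m^2}} \<union> {colE m b | b. b \<in> {1..m^2}} \<union> {blkE m i j | i j. i \<in> {1..m} \<and> j \<in> {1..m}})"
  unfolding SUD_def rowE_def colE_def blkE_def by simp

lemma mem_rowE[simp]: "v \<in> rowE m a \<longleftrightarrow> fst v = a \<and> snd v \<in> {1..m^2}"
  unfolding rowE_def by (cases v) auto
lemma mem_colE[simp]: "v \<in> colE m b \<longleftrightarrow> snd v = b \<and> fst v \<in> {1..m^2}"
  unfolding colE_def by (cases v) auto
lemma mem_blkE[simp]: "v \<in> blkE m i j \<longleftrightarrow> fst v \<in> {1..m^2} \<and> snd v \<in> {1..m^2} \<and> bl m (fst v) = i \<and> bl m (snd v) = j"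
  unfolding blkE_def bl_def by (cases v) auto

definition lonely :: "(nat\<times>nat \<Rightarrow> nat) \<Rightarrow> (nat\<times>nat) set \<Rightarrow> nat\<times>nat \<Rightarrow> bool" where
  "lonely c e v \<longleftrightarrow> v \<in> e \<and> (\<forall>w\<in>e. w \<noteq> v \<longrightarrow> c w \<noteq> c v)"

definition twoc :: "nat \<Rightarrow> (nat\<times>nat \<Rightarrow> nat) \<Rightarrow> bool" where
  "twoc m c \<longleftrightarrow> (\<forall>v\<in>{1..m^2} \<times> {1..m^2}. c v = 1 \<or> c v = 2)"

definition LR :: "nat \<Rightarrow> (nat\<times>nat \<Rightarrow> nat) \<Rightarrow> (nat\<times>nat) set" where
  "LR m c = {v \<in> {1..m^2} \<times> {1..m^2}. lonely c (rowE m (fst v)) v}"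
definition LC :: "nat \<Rightarrow> (nat\<times>nat \<Rightarrow> nat) \<Rightarrow> (nat\<times>nat) set" where
  "LC m c = {v \<in> {1..m^2} \<times> {1..m^2}. lonely c (colE m (snd v)) v}"
definition LB :: "nat \<Rightarrow> (nat\<times>nat \<Rightarrow> nat) \<Rightarrow> (nat\<times>nat) set" where
  "LB m c = {v \<in> {1..m^2} \<times> {1..m^2}. lonely c (blkE m (bl m (fst v)) (bl m (snd v))) v}"

lemma no_three: assumes "twoc m c" "u \<in> {1..m^2} \<times> {1..m^2}" "z \<in> {1..m^2} \<times> {1..m^2}" "w \<in> {1..m^2} \<times> {1..m^2}"
  "c w \<noteq> c u" "c w \<noteq> c z" "c u \<noteq> c z" shows False
proof -
  have "c u = 1 \<or> c u = 2" "c z = 1 \<or> c z = 2" "c w = 1 \<or> c w = 2" using assms(1-4) unfolding twoc_def by blast+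
  thus False using assms(5-7) by auto
qed

lemma pick3: "x1 \<noteq> x2 \<Longrightarrow> x1 \<noteq> x3 \<Longrightarrow> x2 \<noteq> x3 \<Longrightarrow> \<exists>w\<in>{x1,x2,x3}. w \<noteq> u \<and> w \<noteq> z"
  by auto

lemma sq_ge: "m \<ge> 3 \<Longrightarrow> 3 \<le> m^2" for m :: nat
  by (metis le_trans power2_nat_le_imp_le not_less_eq_eq numeral_le_iff  le_square power2_eq_square mult_le_mono)

lemma row_unique: assumes "m \<ge> 3" "twoc m c" "u \<in> LR m c" "u' \<in> LR m c" "fst u = fst u'" shows "u = u'"
proof (rule ccontr)
  assume ne: "u \<noteq> u'"
  define a where "a = fst u"
  have a: "a \<in> {1..m^2}" using assms(3) unfolding LR_def a_def by auto
  have "3 \<le> m^2" using sq_ge assms by auto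
  then obtain w where w: "w \<in> {(a,1),(a,2),(a,3)}" "w \<noteq> u" "w \<noteq> u'" using pick3[of "(a,1)" "(a,2)" "(a,3::nat)" u u'] by auto
  have wV: "w \<in> {1..m^2} \<times> {1..m^2}" using w a \<open>3 \<le> m^2\<close> by auto
  have "w \<in> rowE m a" using wV w by auto
  moreover have "u' \<in> rowE m a" using assms(4,5) a_def unfolding LR_def by auto
  ultimately have "c w \<noteq> c u" "c w \<noteq> c u'" "c u' \<noteq> c u" using assms(3,4,5) w ne unfolding LR_def lonely_def a_def by auto
  thus False using no_three[OF assms(2) _ _ wV, of u u'] assms(3,4) unfolding LR_def by auto
qed


lemma VV_bl: assumes "m \<ge> 3" "v \<in> {1..m^2} \<times> {1..m^2}" shows "bl m (fst v) \<in> {1..m}" "bl m (snd v) \<in> {1..m}"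
  using bl_range assms by (auto simp: mem_Times_iff)

lemma blk_unique: assumes "m \<ge> 3" "twoc m c" "u \<in> LB m c" "u' \<in> LB m c"
  "bl m (fst u) = bl m (fst u')" "bl m (snd u) = bl m (snd u')" shows "u = u'"
proof (rule ccontr)
  assume ne: "u \<noteq> u'"
  define i where "i = bl m (fst u)"
  define j where "j = bl m (snd u)"
  have uV: "u \<in> {1..m^2} \<times> {1..m^2}" using assms(3) unfolding LB_def by auto
  have u'V: "u' \<in> {1..m^2} \<times> {1..m^2}" using assms(4) unfolding LB_def by auto
  have ij: "i \<in> {1..m}" "j \<in> {1..m}" using VV_bl[OF assms(1) uV] i_def j_def by auto
  have lu: "lonely c (blkE m i j) u" using assms(3) unfolding LB_def i_def j_def by simp
  have lu': "lonely c (blkE m i j) u'" using assms(4-6) unfolding LB_def i_def j_def by simp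
  have m0: "m > 0" using assms(1) by simp
  have xin: "((i-1)*m + k, (j-1)*m + 1) \<in> blkE m i j" "((i-1)*m + k, (j-1)*m + 1) \<in> {1..m^2} \<times> {1..m^2}"
    if "1 \<le> k" "k \<le> m" for k
  proof -
    have "bl m ((i-1)*m + k) = i" using bl_loc[OF m0, of i k] ij that by auto
    moreover have "bl m ((j-1)*m + 1) = j" using bl_loc[OF m0, of j 1] ij m0 by auto
    moreover have "(i-1)*m + k \<in> {1..m^2}" using loc_range[OF m0, of i k] ij that by auto
    moreover have "(j-1)*m + 1 \<in> {1..m^2}" using loc_range[OF m0, of j 1] ij m0 by auto
    ultimately show "((i-1)*m + k, (j-1)*m + 1) \<in> blkE m i j" "((i-1)*m + k, (j-1)*m + 1) \<in> {1..m^2} \<times> {1..m^2}"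
      by auto
  qed
  obtain w where w: "w \<in> {((i-1)*m + 1, (j-1)*m + 1), ((i-1)*m + 2, (j-1)*m + 1), ((i-1)*m + 3, (j-1)*m + 1)}"
    "w \<noteq> u" "w \<noteq> u'"
    using pick3[of "((i-1)*m + 1, (j-1)*m + 1)" "((i-1)*m + 2, (j-1)*m + 1)" "((i-1)*m + 3, (j-1)*m + 1)" u u'] by auto
  have wV: "w \<in> {1..m^2} \<times> {1..m^2}" "w \<in> blkE m i j"
    using w(1) xin[of 1] xin[of 2] xin[of 3] assms(1) by auto
  have "c w \<noteq> c u" using lu wV(2) w(2) unfolding lonely_def by blast
  moreover have "c w \<noteq> c u'" using lu' wV(2) w(3) unfolding lonely_def by blast
  moreover have "c u' \<noteq> c u" using lu lu' ne[symmetric] unfolding lonely_def by blast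
  ultimately show False using no_three[OF assms(2) uV u'V wV(1)] by metis
qed

lemma F2: assumes "m \<ge> 3" "twoc m c" "u \<in> LR m c" "z \<in> LB m c"
  "bl m (fst z) = bl m (fst u)" "bl m (snd z) = bl m (snd u)" shows "u = z"
proof (rule ccontr)
  assume ne: "u \<noteq> z"
  define i where "i = bl m (fst u)"
  define j where "j = bl m (snd u)"
  define a where "a = fst u"
  have uV: "u \<in> {1..m^2} \<times> {1..m^2}" using assms(3) unfolding LR_def by auto
  have zV: "z \<in> {1..m^2} \<times> {1..m^2}" using assms(4) unfolding LB_def by auto
  have ij: "i \<in> {1..m}" "j \<in> {1..m}" using VV_bl[OF assms(1) uV] i_def j_def by auto
  have lu: "lonely c (rowE m a) u" using assms(3) unfolding LR_def a_def by simp
  have lz: "lonely c (blkE m i j) z" using assms(4-6) unfolding LB_def i_def j_def by simp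
  have m0: "m > 0" using assms(1) by simp
  have aV: "a \<in> {1..m^2}" "bl m a = i" using uV a_def i_def by auto
  have xin: "(a, (j-1)*m + k) \<in> blkE m i j" "(a, (j-1)*m + k) \<in> {1..m^2} \<times> {1..m^2}" "(a, (j-1)*m + k) \<in> rowE m a"
    if "1 \<le> k" "k \<le> m" for k
  proof -
    have "bl m ((j-1)*m + k) = j" using bl_loc[OF m0, of j k] ij that by auto
    moreover have "(j-1)*m + k \<in> {1..m^2}" using loc_range[OF m0, of j k] ij that by auto
    ultimately show "(a, (j-1)*m + k) \<in> blkE m i j" "(a, (j-1)*m + k) \<in> {1..m^2} \<times> {1..m^2}" "(a, (j-1)*m + k) \<in> rowE m a"
      using aV by auto
  qed
  obtain w where w: "w \<in> {(a, (j-1)*m + 1), (a, (j-1)*m + 2), (a, (j-1)*m + 3)}" "w \<noteq> u" "w \<noteq> z"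
    using pick3[of "(a, (j-1)*m + 1)" "(a, (j-1)*m + 2)" "(a, (j-1)*m + 3)" u z] by auto
  have wV: "w \<in> {1..m^2} \<times> {1..m^2}" "w \<in> blkE m i j" "w \<in> rowE m a"
    using w(1) xin[of 1] xin[of 2] xin[of 3] assms(1) by auto
  have uB: "u \<in> blkE m i j" using uV i_def j_def by auto
  have "c w \<noteq> c u" using lu wV(3) w(2) unfolding lonely_def by blast
  moreover have "c w \<noteq> c z" using lz wV(2) w(3) unfolding lonely_def by blast
  moreover have "c u \<noteq> c z" using lz uB ne unfolding lonely_def by blast
  ultimately show False using no_three[OF assms(2) uV zV wV(1)] by blast
qed

definition Rows :: "nat \<Rightarrow> nat \<Rightarrow> nat set" where "Rows m i = {a \<in> {1..m^2}. bl m a = i}"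

lemma Rows_eq: assumes "m \<ge> 3" "i \<in> {1..m}" shows "Rows m i = (\<lambda>k. (i-1)*m + k) ` {1..m}"
proof
  show "(\<lambda>k. (i-1)*m + k) ` {1..m} \<subseteq> Rows m i"
  proof
    fix x assume "x \<in> (\<lambda>k. (i-1)*m + k) ` {1..m}"
    then obtain k where k: "k \<in> {1..m}" "x = (i-1)*m + k" by blast
    have m0: "m > 0" using assms by simp
    show "x \<in> Rows m i" unfolding Rows_def using k bl_loc[OF m0, of i k] loc_range[OF m0, of i k] assms by auto
  qed
next
  show "Rows m i \<subseteq> (\<lambda>k. (i-1)*m + k) ` {1..m}"
  proof
    fix a assume "a \<in> Rows m i"
    hence a: "a \<in> {1..m^2}" "bl m a = i" unfolding Rows_def by auto
    hence h: "i*m < a + m" "a \<le> i*m" using bl_iff[of m a i] assms by auto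
    have e: "(i-1)*m + m = i*m" using assms by (cases i) auto
    have "a = (i-1)*m + (a + m - i*m)" using h e by auto
    moreover have "a + m - i*m \<in> {1..m}" using h e by auto
    ultimately show "a \<in> (\<lambda>k. (i-1)*m + k) ` {1..m}" by blast
  qed
qed

lemma card_Rows: assumes "m \<ge> 3" "i \<in> {1..m}" shows "card (Rows m i) = m" "finite (Rows m i)"
  using Rows_eq[OF assms] by (auto simp: card_image inj_on_def)


definition LRi where "LRi m c i = {v \<in> LR m c. bl m (fst v) = i}"
definition LBi where "LBi m c i = {v \<in> LB m c. bl m (fst v) = i}"

lemma fin_LR: "finite (LR m c)" "finite (LB m c)" "finite (LC m c)"
  unfolding LR_def LB_def LC_def by (auto intro: finite_subset[of _ "{1..m^2} \<times> {1..m^2}"])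

lemma fin_LRi: "finite (LRi m c i)" "finite (LBi m c i)"
  unfolding LRi_def LBi_def using fin_LR by auto

lemma band: assumes m: "m \<ge> 3" and tc: "twoc m c" and i: "i \<in> {1..m}"
  shows "2 * card (LRi m c i) + card (LBi m c i) \<le> 3*m - 3 + 2 * card (LRi m c i \<inter> LBi m c i)"
proof -
  let ?R = "LRi m c i" and ?B = "LBi m c i"
  have injR: "inj_on fst ?R" unfolding inj_on_def LRi_def using row_unique[OF m tc] by blast
  have imR: "fst ` ?R \<subseteq> Rows m i" unfolding LRi_def LR_def Rows_def by auto
  have cR: "card ?R = card (fst ` ?R)" using card_image[OF injR] by simp
  have pR: "card ?R \<le> m" using cR card_mono[OF card_Rows(2)[OF m i] imR] card_Rows(1)[OF m i] by simp
  have injB: "inj_on (\<lambda>v. bl m (snd v)) ?B" unfolding inj_on_def LBi_def using blk_unique[OF m tc] by blast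
  have imB: "(\<lambda>v. bl m (snd v)) ` ?B \<subseteq> {1..m}" unfolding LBi_def LB_def using VV_bl[OF m] by auto
  have cB: "card ?B = card ((\<lambda>v. bl m (snd v)) ` ?B)" using card_image[OF injB] by simp
  have pB: "card ?B \<le> m" using cB card_mono[OF _ imB] by simp
  have tR: "card (?R \<inter> ?B) \<le> card ?R" by (rule card_mono) (auto simp: fin_LRi)
  show ?thesis
  proof (cases "card ?B = m")
    case True
    hence surj: "(\<lambda>v. bl m (snd v)) ` ?B = {1..m}" using cB imB by (intro card_subset_eq) auto
    have "?R \<subseteq> ?B"
    proof
      fix u assume u: "u \<in> ?R"
      have "bl m (snd u) \<in> {1..m}" using u VV_bl[OF m] unfolding LRi_def LR_def by auto
      then obtain z where z: "z \<in> ?B" "bl m (snd z) = bl m (snd u)" using surj by (metis (no_types, lifting) imageE)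
      have "u = z" using F2[OF m tc, of u z] u z unfolding LRi_def LBi_def by auto
      thus "u \<in> ?B" using z by simp
    qed
    hence "?R \<inter> ?B = ?R" by auto
    thus ?thesis using True m by simp
  next
    case False
    hence qB: "card ?B \<le> m - 1" using pB by simp
    show ?thesis
    proof (cases "card ?R = m \<and> card (?R \<inter> ?B) = 0")
      case True
      hence surj: "fst ` ?R = Rows m i" using cR imR card_Rows[OF m i] by (intro card_subset_eq) auto
      have disj: "?R \<inter> ?B = {}" using True fin_LRi by auto
      have "?B = {}"
      proof (rule ccontr)
        assume "?B \<noteq> {}"
        then obtain z where z: "z \<in> ?B" by auto
        define a where "a = fst z"
        define j where "j = bl m (snd z)"
        have zV: "z \<in> {1..m^2} \<times> {1..m^2}" using z unfolding LBi_def LB_def by auto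
        have j: "j \<in> {1..m}" using VV_bl[OF m zV] j_def by auto
        have "a \<in> Rows m i" using z zV unfolding a_def Rows_def LBi_def by auto
        then obtain u where u: "u \<in> ?R" "fst u = a" using surj by (metis imageE)
        have uz: "u \<noteq> z" using u z disj by auto
        have uV: "u \<in> {1..m^2} \<times> {1..m^2}" using u unfolding LRi_def LR_def by auto
        have bu: "bl m (snd u) \<noteq> j"
        proof
          assume "bl m (snd u) = j"
          hence "u = z" using F2[OF m tc, of u z] u z unfolding LRi_def LBi_def a_def j_def by auto
          thus False using uz by simp
        qed
        have m0: "m > 0" using m by simp
        have zi: "bl m a = i" using z unfolding LBi_def a_def by simp
        have aV: "a \<in> {1..m^2}" using zV a_def by auto
        have lz: "lonely c (blkE m i j) z" using z unfolding LBi_def LB_def a_def j_def by auto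
        have lu: "lonely c (rowE m a) u" using u unfolding LRi_def LR_def by auto
        have xin: "(a, (j-1)*m + k) \<in> blkE m i j" "(a, (j-1)*m + k) \<in> {1..m^2} \<times> {1..m^2}"
            "(a, (j-1)*m + k) \<in> rowE m a" "bl m ((j-1)*m + k) = j"
          if "1 \<le> k" "k \<le> m" for k
        proof -
          have "bl m ((j-1)*m + k) = j" using bl_loc[OF m0, of j k] j that by auto
          moreover have "(j-1)*m + k \<in> {1..m^2}" using loc_range[OF m0, of j k] j that by auto
          ultimately show "(a, (j-1)*m + k) \<in> blkE m i j" "(a, (j-1)*m + k) \<in> {1..m^2} \<times> {1..m^2}"
            "(a, (j-1)*m + k) \<in> rowE m a" "bl m ((j-1)*m + k) = j" using aV zi by auto
        qed
        define w where "w = (if (a, (j-1)*m + 1) = z then (a, (j-1)*m + 2) else (a, (j-1)*m + 1))"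
        have wV: "w \<in> {1..m^2} \<times> {1..m^2}" "w \<in> blkE m i j" "w \<in> rowE m a" "bl m (snd w) = j"
          using xin[of 1] xin[of 2] m unfolding w_def by auto
        have wz: "w \<noteq> z" unfolding w_def by auto
        have wu: "w \<noteq> u" using wV(4) bu by auto
        have zb: "z \<in> rowE m a" using zV a_def by auto
        have "c w \<noteq> c u" using lu wV(3) wu unfolding lonely_def by blast
        moreover have "c z \<noteq> c u" using lu zb uz[symmetric] unfolding lonely_def by blast
        moreover have "c w \<noteq> c z" using lz wV(2) wz unfolding lonely_def by blast
        ultimately show False using no_three[OF tc uV zV wV(1)] by metis
      qed
      thus ?thesis using True m by simp
    next
      case False
      hence "card ?R \<le> m - 1 + card (?R \<inter> ?B)" using pR by auto
      thus ?thesis using qB m by linarith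
    qed
  qed
qed


lemma card_fibres: assumes "finite A" "finite I" "f ` A \<subseteq> I"
  shows "card A = (\<Sum>i\<in>I. card {x\<in>A. f x = i})"
proof -
  have "A = (\<Union>i\<in>I. {x\<in>A. f x = i})" using assms(3) by auto
  hence "card A = card (\<Union>i\<in>I. {x\<in>A. f x = i})" by simp
  also have "\<dots> = (\<Sum>i\<in>I. card {x\<in>A. f x = i})"
    by (rule card_UN_disjoint) (use assms in auto)
  finally show ?thesis .
qed

lemma G: assumes m: "m \<ge> 3" and tc: "twoc m c"
  shows "2 * card (LR m c) + card (LB m c) \<le> m * (3*m - 3) + 2 * card (LR m c \<inter> LB m c)"
proof -
  have imR: "(\<lambda>v. bl m (fst v)) ` LR m c \<subseteq> {1..m}" unfolding LR_def using VV_bl[OF m] by auto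
  have imB: "(\<lambda>v. bl m (fst v)) ` LB m c \<subseteq> {1..m}" unfolding LB_def using VV_bl[OF m] by auto
  have cR: "card (LR m c) = (\<Sum>i\<in>{1..m}. card (LRi m c i))"
    unfolding LRi_def by (rule card_fibres) (use fin_LR imR in auto)
  have cB: "card (LB m c) = (\<Sum>i\<in>{1..m}. card (LBi m c i))"
    unfolding LBi_def by (rule card_fibres) (use fin_LR imB in auto)
  have cRB: "card (LR m c \<inter> LB m c) = (\<Sum>i\<in>{1..m}. card (LRi m c i \<inter> LBi m c i))"
  proof -
    have e: "\<And>i. LRi m c i \<inter> LBi m c i = {x \<in> LR m c \<inter> LB m c. bl m (fst x) = i}"
      unfolding LRi_def LBi_def by auto
    show ?thesis unfolding e by (rule card_fibres) (use fin_LR imR in auto)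
  qed
  obtain K where K: "K = 3*m - 3" by simp
  have "(\<Sum>i\<in>{1..m}. 2 * card (LRi m c i) + card (LBi m c i))
        \<le> (\<Sum>i\<in>{1..m}. K + 2 * card (LRi m c i \<inter> LBi m c i))"
    by (rule sum_mono) (use band[OF m tc] K in auto)
  also have "\<dots> = m * K + 2 * (\<Sum>i\<in>{1..m}. card (LRi m c i \<inter> LBi m c i))"
    by (simp add: sum.distrib sum_distrib_left)
  finally have "2 * (\<Sum>i\<in>{1..m}. card (LRi m c i)) + (\<Sum>i\<in>{1..m}. card (LBi m c i))
      \<le> m * K + 2 * (\<Sum>i\<in>{1..m}. card (LRi m c i \<inter> LBi m c i))"
    by (simp add: sum.distrib sum_distrib_left)
  thus ?thesis unfolding cR cB cRB K .
qed

definition tr :: "(nat\<times>nat \<Rightarrow> nat) \<Rightarrow> (nat\<times>nat \<Rightarrow> nat)" where "tr c = (\<lambda>v. c (prod.swap v))"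

lemma twoc_tr: "twoc m c \<Longrightarrow> twoc m (tr c)"
  unfolding twoc_def tr_def by auto

lemma LC_tr_mem: "v \<in> LC m c \<longleftrightarrow> prod.swap v \<in> LR m (tr c)"
proof -
  obtain a b where v: "v = (a,b)" by (cases v)
  have 2: "(\<forall>w\<in>colE m b. w \<noteq> (a,b) \<longrightarrow> c w \<noteq> c (a,b)) \<longleftrightarrow>
           (\<forall>w\<in>rowE m b. w \<noteq> (b,a) \<longrightarrow> c (prod.swap w) \<noteq> c (a,b))"
  proof
    assume L: "\<forall>w\<in>colE m b. w \<noteq> (a,b) \<longrightarrow> c w \<noteq> c (a,b)"
    show "\<forall>w\<in>rowE m b. w \<noteq> (b,a) \<longrightarrow> c (prod.swap w) \<noteq> c (a,b)"
    proof (intro ballI impI)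
      fix w assume "w \<in> rowE m b" "w \<noteq> (b,a)"
      hence "prod.swap w \<in> colE m b" "prod.swap w \<noteq> (a,b)" by (cases w, auto)+
      thus "c (prod.swap w) \<noteq> c (a,b)" using L by blast
    qed
  next
    assume R: "\<forall>w\<in>rowE m b. w \<noteq> (b,a) \<longrightarrow> c (prod.swap w) \<noteq> c (a,b)"
    show "\<forall>w\<in>colE m b. w \<noteq> (a,b) \<longrightarrow> c w \<noteq> c (a,b)"
    proof (intro ballI impI)
      fix w assume "w \<in> colE m b" "w \<noteq> (a,b)"
      hence "prod.swap w \<in> rowE m b" "prod.swap w \<noteq> (b,a)" by (cases w, auto)+
      thus "c w \<noteq> c (a,b)" using R by force
    qed
  qed
  show ?thesis unfolding v LC_def LR_def lonely_def tr_def using 2 by auto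
qed

lemma LC_tr: "LC m c = prod.swap ` LR m (tr c)"
proof
  show "LC m c \<subseteq> prod.swap ` LR m (tr c)"
  proof
    fix v assume "v \<in> LC m c"
    hence "prod.swap v \<in> LR m (tr c)" using LC_tr_mem by blast
    thus "v \<in> prod.swap ` LR m (tr c)" by (metis image_eqI swap_swap)
  qed
  show "prod.swap ` LR m (tr c) \<subseteq> LC m c" using LC_tr_mem by (auto simp: swap_swap)
qed


lemma LB_tr_mem: "v \<in> LB m c \<longleftrightarrow> prod.swap v \<in> LB m (tr c)"
proof -
  obtain a b where v: "v = (a,b)" by (cases v)
  have 2: "(\<forall>w\<in>blkE m (bl m a) (bl m b). w \<noteq> (a,b) \<longrightarrow> c w \<noteq> c (a,b)) \<longleftrightarrow>
           (\<forall>w\<in>blkE m (bl m b) (bl m a). w \<noteq> (b,a) \<longrightarrow> c (prod.swap w) \<noteq> c (a,b))"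
  proof
    assume L: "\<forall>w\<in>blkE m (bl m a) (bl m b). w \<noteq> (a,b) \<longrightarrow> c w \<noteq> c (a,b)"
    show "\<forall>w\<in>blkE m (bl m b) (bl m a). w \<noteq> (b,a) \<longrightarrow> c (prod.swap w) \<noteq> c (a,b)"
    proof (intro ballI impI)
      fix w assume "w \<in> blkE m (bl m b) (bl m a)" "w \<noteq> (b,a)"
      hence "prod.swap w \<in> blkE m (bl m a) (bl m b)" "prod.swap w \<noteq> (a,b)" by (cases w, auto)+
      thus "c (prod.swap w) \<noteq> c (a,b)" using L by blast
    qed
  next
    assume R: "\<forall>w\<in>blkE m (bl m b) (bl m a). w \<noteq> (b,a) \<longrightarrow> c (prod.swap w) \<noteq> c (a,b)"
    show "\<forall>w\<in>blkE m (bl m a) (bl m b). w \<noteq> (a,b) \<longrightarrow> c w \<noteq> c (a,b)"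
    proof (intro ballI impI)
      fix w assume "w \<in> blkE m (bl m a) (bl m b)" "w \<noteq> (a,b)"
      hence "prod.swap w \<in> blkE m (bl m b) (bl m a)" "prod.swap w \<noteq> (b,a)" by (cases w, auto)+
      thus "c w \<noteq> c (a,b)" using R by force
    qed
  qed
  show ?thesis unfolding v LB_def lonely_def tr_def using 2 by auto
qed

lemma LB_tr: "LB m c = prod.swap ` LB m (tr c)"
proof
  show "LB m c \<subseteq> prod.swap ` LB m (tr c)"
  proof
    fix v assume "v \<in> LB m c"
    hence "prod.swap v \<in> LB m (tr c)" using LB_tr_mem by blast
    thus "v \<in> prod.swap ` LB m (tr c)" by (metis image_eqI swap_swap)
  qed
  show "prod.swap ` LB m (tr c) \<subseteq> LB m c" using LB_tr_mem by (auto simp: swap_swap)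
qed

lemma Lall_bound: assumes m: "m \<ge> 3" and tc: "twoc m c"
  shows "card (LR m c \<union> LC m c \<union> LB m c) \<le> 3*m^2 - 3*m"
proof -
  have injs: "inj (prod.swap :: nat\<times>nat \<Rightarrow> nat\<times>nat)" unfolding inj_on_def by (metis swap_swap)
  have inj: "inj_on prod.swap A" for A :: "(nat\<times>nat) set" using injs by (rule inj_on_subset) simp
  have g1: "2 * card (LR m c) + card (LB m c) \<le> m * (3*m - 3) + 2 * card (LR m c \<inter> LB m c)"
    using G[OF m tc] .
  have g2: "2 * card (LR m (tr c)) + card (LB m (tr c)) \<le> m * (3*m - 3) + 2 * card (LR m (tr c) \<inter> LB m (tr c))"
    using G[OF m twoc_tr[OF tc]] .
  have e1: "card (LC m c) = card (LR m (tr c))" unfolding LC_tr by (rule card_image[OF inj])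
  have e2': "card (prod.swap ` LB m (tr c)) = card (LB m (tr c))" by (rule card_image[OF inj])
  have e2: "card (LB m c) = card (LB m (tr c))" by (rule trans[OF arg_cong[where f=card, OF LB_tr] e2'])
  have i3: "LC m c \<inter> LB m c = prod.swap ` (LR m (tr c) \<inter> LB m (tr c))"
    using LC_tr[of m c] LB_tr[of m c] image_Int[OF injs, of "LR m (tr c)" "LB m (tr c)"] by metis
  have e3': "card (prod.swap ` (LR m (tr c) \<inter> LB m (tr c))) = card (LR m (tr c) \<inter> LB m (tr c))"
    by (rule card_image[OF inj])
  have e3: "card (LC m c \<inter> LB m c) = card (LR m (tr c) \<inter> LB m (tr c))" by (rule trans[OF arg_cong[where f=card, OF i3] e3'])
  have u1: "card (LR m c \<union> LB m c) + card (LR m c \<inter> LB m c) = card (LR m c) + card (LB m c)"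
    using card_Un_Int[OF fin_LR(1) fin_LR(2), of m c m c] by simp
  have u2a: "card (LC m c - LB m c) = card (LC m c) - card (LC m c \<inter> LB m c)"
    by (rule card_Diff_subset_Int) (simp add: fin_LR)
  have u2b: "card (LC m c \<inter> LB m c) \<le> card (LC m c)" by (rule card_mono) (auto simp: fin_LR)
  have u2: "card (LC m c - LB m c) + card (LC m c \<inter> LB m c) = card (LC m c)" using u2a u2b by simp
  have "LR m c \<union> LC m c \<union> LB m c = (LR m c \<union> LB m c) \<union> (LC m c - LB m c)" by auto
  hence "card (LR m c \<union> LC m c \<union> LB m c) \<le> card (LR m c \<union> LB m c) + card (LC m c - LB m c)"
    by (simp add: card_Un_le)
  moreover have "m * (3*m - 3) = 3*m^2 - 3*m" by (simp add: power2_eq_square algebra_simps diff_mult_distrib2)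
  ultimately show ?thesis using g1 g2 e1 e2 e3 u1 u2 by linarith
qed


definition L0 :: "nat \<Rightarrow> (nat\<times>nat) set" where
  "L0 m = {v \<in> {1..m^2} \<times> {1..m^2}. (bl m (fst v) = bl m (snd v) \<and> (m dvd fst v \<longleftrightarrow> \<not> m dvd snd v))
      \<or> (m dvd fst v \<and> m dvd snd v \<and> bl m (fst v) \<noteq> bl m (snd v))}"

definition c0 :: "nat \<Rightarrow> nat\<times>nat \<Rightarrow> nat" where "c0 m v = (if v \<in> L0 m then 1 else 2)"

lemma edge_cases: assumes "e \<in> snd (SUD m)"
  shows "(\<exists>a\<in>{1..m^2}. e = rowE m a) \<or> (\<exists>b\<in>{1..m^2}. e = colE m b) \<or> (\<exists>i\<in>{1..m}. \<exists>j\<in>{1..m}. e = blkE m i j)"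
proof -
  have "e \<in> {rowE m a | a. a \<in> {1..m^2}} \<union> {colE m b | b. b \<in> {1..m^2}} \<union> {blkE m i j | i j. i \<in> {1..m} \<and> j \<in> {1..m}}"
    using assms unfolding SUD_eq snd_conv .
  thus ?thesis by blast
qed

lemma edge_sub: assumes "e \<in> snd (SUD m)" "m > 0" shows "e \<subseteq> {1..m^2} \<times> {1..m^2}"
  using edge_cases[OF assms(1)] by (auto simp: mem_Times_iff)

lemma locf: assumes m: "m \<ge> 3" and j: "j \<in> {1..m}" and k: "1 \<le> k" "k \<le> m"
  shows "bl m ((j-1)*m+k) = j" "(j-1)*m+k \<in> {1..m^2}" "m dvd ((j-1)*m+k) \<longleftrightarrow> k = m"
proof -
  have m0: "m > 0" using m by simp
  show "bl m ((j-1)*m+k) = j" using bl_loc[OF m0, of j k] j k by auto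
  show "(j-1)*m+k \<in> {1..m^2}" using loc_range[OF m0, of j k] j k by auto
  show "m dvd ((j-1)*m+k) \<longleftrightarrow> k = m"
  proof
    assume "m dvd ((j-1)*m+k)"
    thus "k = m" using not_dvd_loc[OF m0, of k j] k by (cases "k < m") auto
  next
    assume "k = m" thus "m dvd ((j-1)*m+k)" by simp
  qed
qed

lemma other_idx: "m \<ge> 3 \<Longrightarrow> \<exists>j\<in>{1..m}. j \<noteq> (i::nat)"
  by (intro bexI[of _ "if i = 1 then 2 else 1"]) auto

lemma edges_ok: assumes m: "m \<ge> 3" and e: "e \<in> snd (SUD m)"
  shows "\<exists>x\<in>e. x \<in> L0 m" "\<exists>y1\<in>e. \<exists>y2\<in>e. y1 \<noteq> y2 \<and> y1 \<notin> L0 m \<and> y2 \<notin> L0 m"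
proof -
  have m0: "m > 0" using m by auto
  have "(\<exists>x\<in>e. x \<in> L0 m) \<and> (\<exists>y1\<in>e. \<exists>y2\<in>e. y1 \<noteq> y2 \<and> y1 \<notin> L0 m \<and> y2 \<notin> L0 m)"
  proof (rule disjE[OF edge_cases[OF e]])
    assume "\<exists>a\<in>{1..m^2}. e = rowE m a"
    then obtain a where a: "a \<in> {1..m^2}" "e = rowE m a" by auto
    define i where "i = bl m a"
    have i: "i \<in> {1..m}" using bl_range[OF m0 a(1)] i_def by auto
    obtain j where j: "j \<in> {1..m}" "j \<noteq> i" using other_idx[OF m] by blast
    have y1: "(a, (j-1)*m + 1) \<in> e" "(a, (j-1)*m + 1) \<notin> L0 m"
      using a j m locf[OF m j(1), of 1] unfolding L0_def i_def by auto
    have y2: "(a, (j-1)*m + 2) \<in> e" "(a, (j-1)*m + 2) \<notin> L0 m"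
      using a j m locf[OF m j(1), of 2] unfolding L0_def i_def by auto
    have x: "\<exists>x\<in>e. x \<in> L0 m"
    proof (cases "m dvd a")
      case True
      have "(a, (i-1)*m + 1) \<in> L0 m" "(a, (i-1)*m + 1) \<in> e"
        using True a m locf[OF m i, of 1] unfolding L0_def i_def by auto
      thus ?thesis by blast
    next
      case False
      have "(a, (i-1)*m + m) \<in> L0 m" "(a, (i-1)*m + m) \<in> e"
        using False a m locf[OF m i, of m] unfolding L0_def i_def by auto
      thus ?thesis by blast
    qed
    have "(a, (j-1)*m + 1) \<noteq> (a, (j-1)*m + 2)" by simp
    thus ?thesis using x y1 y2 by blast
  next
    assume "(\<exists>b\<in>{1..m^2}. e = colE m b) \<or> (\<exists>i\<in>{1..m}. \<exists>j\<in>{1..m}. e = blkE m i j)"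
    thus ?thesis
    proof
      assume "\<exists>b\<in>{1..m^2}. e = colE m b"
      then obtain a where a: "a \<in> {1..m^2}" "e = colE m a" by auto
      define i where "i = bl m a"
      have i: "i \<in> {1..m}" using bl_range[OF m0 a(1)] i_def by auto
      obtain j where j: "j \<in> {1..m}" "j \<noteq> i" using other_idx[OF m] by blast
      have y1: "((j-1)*m + 1, a) \<in> e" "((j-1)*m + 1, a) \<notin> L0 m"
        using a j m locf[OF m j(1), of 1] unfolding L0_def i_def by auto
      have y2: "((j-1)*m + 2, a) \<in> e" "((j-1)*m + 2, a) \<notin> L0 m"
        using a j m locf[OF m j(1), of 2] unfolding L0_def i_def by auto
      have x: "\<exists>x\<in>e. x \<in> L0 m"
      proof (cases "m dvd a")
        case True
        have "((i-1)*m + 1, a) \<in> L0 m" "((i-1)*m + 1, a) \<in> e"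
          using True a m locf[OF m i, of 1] unfolding L0_def i_def by auto
        thus ?thesis by blast
      next
        case False
        have "((i-1)*m + m, a) \<in> L0 m" "((i-1)*m + m, a) \<in> e"
          using False a m locf[OF m i, of m] unfolding L0_def i_def by auto
        thus ?thesis by blast
      qed
      have "((j-1)*m + 1, a) \<noteq> ((j-1)*m + 2, a)" by simp
      thus ?thesis using x y1 y2 by blast
    next
      assume "\<exists>i\<in>{1..m}. \<exists>j\<in>{1..m}. e = blkE m i j"
      then obtain i j where ij: "i \<in> {1..m}" "j \<in> {1..m}" "e = blkE m i j" by auto
      have y1: "((i-1)*m + 1, (j-1)*m + 1) \<in> e" "((i-1)*m + 1, (j-1)*m + 1) \<notin> L0 m"
        using ij m locf[OF m ij(1), of 1] locf[OF m ij(2), of 1] unfolding L0_def by auto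
      have y2: "((i-1)*m + 2, (j-1)*m + 1) \<in> e" "((i-1)*m + 2, (j-1)*m + 1) \<notin> L0 m"
        using ij m locf[OF m ij(1), of 2] locf[OF m ij(2), of 1] unfolding L0_def by auto
      have x: "\<exists>x\<in>e. x \<in> L0 m"
      proof (cases "i = j")
        case True
        have "((i-1)*m + 1, (i-1)*m + m) \<in> L0 m" "((i-1)*m + 1, (i-1)*m + m) \<in> e"
          using True ij m locf[OF m ij(1), of 1] locf[OF m ij(1), of m] unfolding L0_def by auto
        thus ?thesis by blast
      next
        case False
        have "((i-1)*m + m, (j-1)*m + m) \<in> L0 m" "((i-1)*m + m, (j-1)*m + m) \<in> e"
          using False ij m locf[OF m ij(1), of m] locf[OF m ij(2), of m] unfolding L0_def by auto
        thus ?thesis by blast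
      qed
      have "((i-1)*m + 1, (j-1)*m + 1) \<noteq> ((i-1)*m + 2, (j-1)*m + 1)" by simp
      thus ?thesis using x y1 y2 by blast
    qed
  qed
  thus "\<exists>x\<in>e. x \<in> L0 m" "\<exists>y1\<in>e. \<exists>y2\<in>e. y1 \<noteq> y2 \<and> y1 \<notin> L0 m \<and> y2 \<notin> L0 m" by auto
qed


lemma c0_col: assumes m: "m \<ge> 3" shows "is_colouring (SUD m) 2 (c0 m)"
  unfolding is_colouring_def
proof (intro conjI ballI notI)
  fix v assume "v \<in> fst (SUD m)" show "c0 m v \<in> {1..2}" unfolding c0_def by auto
next
  fix e assume e: "e \<in> snd (SUD m)" and ex: "\<exists>i. \<forall>v\<in>e. c0 m v = i"
  obtain x where x: "x \<in> e" "x \<in> L0 m" using edges_ok(1)[OF m e] by auto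
  obtain y where y: "y \<in> e" "y \<notin> L0 m" using edges_ok(2)[OF m e] by auto
  from ex obtain i where "\<forall>v\<in>e. c0 m v = i" by auto
  hence "c0 m x = c0 m y" using x y by auto
  thus False using x y unfolding c0_def by auto
qed

lemma chi_SUD: assumes m: "m \<ge> 3" shows "chi (SUD m) = 2"
proof -
  have ex: "\<exists>c. is_colouring (SUD m) 2 c" using c0_col[OF m] by blast
  have no: "\<not> (\<exists>c. is_colouring (SUD m) k c)" if "k < 2" for k
  proof
    assume "\<exists>c. is_colouring (SUD m) k c"
    then obtain c where c: "is_colouring (SUD m) k c" by auto
    have r: "rowE m 1 \<in> snd (SUD m)" "(1,1) \<in> fst (SUD m)" using m unfolding SUD_eq
      using sq_ge[OF m] by auto
    have v: "\<forall>v\<in>fst (SUD m). c v \<in> {1..k}" using c unfolding is_colouring_def by auto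
    have "rowE m 1 \<subseteq> fst (SUD m)" using edge_sub[OF r(1)] m unfolding SUD_eq by auto
    hence "\<forall>v\<in>rowE m 1. c v = 1" using v that by fastforce
    moreover have "(1,1) \<in> fst (SUD m)" using r by auto
    hence "k \<ge> 1" using v by fastforce
    ultimately show False using c r unfolding is_colouring_def by blast
  qed
  show ?thesis unfolding chi_def
    by (rule Least_equality) (use ex no in \<open>auto simp: not_less[symmetric]\<close>)
qed

lemma chi_col_iff: assumes m: "m \<ge> 3" shows "chi_colouring (SUD m) c \<longleftrightarrow> is_colouring (SUD m) 2 c"
  unfolding chi_colouring_def chi_SUD[OF m] ..

lemma flip: assumes m: "m \<ge> 3" and c: "is_colouring (SUD m) 2 c" and S: "determining_set (SUD m) c S"
  and v: "v \<in> fst (SUD m)" "v \<notin> S"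
  shows "\<exists>e\<in>snd (SUD m). lonely c e v"
proof (rule ccontr)
  assume nl: "\<not> (\<exists>e\<in>snd (SUD m). lonely c e v)"
  define c' where "c' = c(v := 3 - c v)"
  have cv: "c v \<in> {1..2}" using c v unfolding is_colouring_def by auto
  have "is_colouring (SUD m) 2 c'"
    unfolding is_colouring_def
  proof (intro conjI ballI notI)
    fix w assume "w \<in> fst (SUD m)" thus "c' w \<in> {1..2}" using c cv unfolding c'_def is_colouring_def by auto
  next
    fix e assume e: "e \<in> snd (SUD m)" and ex: "\<exists>i. \<forall>w\<in>e. c' w = i"
    then obtain i where i: "\<forall>w\<in>e. c' w = i" by auto
    show False
    proof (cases "v \<in> e")
      case False
      hence "\<forall>w\<in>e. c w = i" using i unfolding c'_def by auto
      thus False using c e unfolding is_colouring_def by blast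
    next
      case True
      have iv: "i = 3 - c v" using i True unfolding c'_def by auto
      have "lonely c e v" unfolding lonely_def
      proof (intro conjI ballI impI)
        show "v \<in> e" by fact
        fix w assume w: "w \<in> e" "w \<noteq> v"
        hence "c w = 3 - c v" using i iv unfolding c'_def by auto
        thus "c w \<noteq> c v" using cv by (cases "c v = 1") auto
      qed
      thus False using nl e by blast
    qed
  qed
  hence "chi_colouring (SUD m) c'" using chi_col_iff[OF m] by simp
  moreover have "\<forall>w\<in>S. c' w = c w" using v unfolding c'_def by auto
  ultimately have "c' v = c v" using S v unfolding determining_set_def by blast
  thus False using cv unfolding c'_def by (cases "c v = 1") auto
qed

lemma lonely_in_L: assumes m: "m \<ge> 3" and e: "e \<in> snd (SUD m)" and l: "lonely c e v"
  shows "v \<in> LR m c \<union> LC m c \<union> LB m c"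
proof -
  have vV: "v \<in> {1..m^2} \<times> {1..m^2}" using l edge_sub[OF e] m unfolding lonely_def by auto
  show ?thesis using edge_cases[OF e] l vV unfolding LR_def LC_def LB_def lonely_def by auto
qed

lemma twoc_of: assumes "is_colouring (SUD m) 2 c" shows "twoc m c"
  unfolding twoc_def
proof
  fix v assume "v \<in> {1..m^2} \<times> {1..m^2}"
  hence "c v \<in> {1..2}" using assms unfolding is_colouring_def SUD_eq by auto
  thus "c v = 1 \<or> c v = 2" by auto
qed

lemma card_V: "card ({1..m^2} \<times> {1..m^2}) = m^4"
  by (simp add: card_cartesian_product power2_eq_square power4_eq_xxxx)

lemma det_lower: assumes m: "m \<ge> 3" and c: "is_colouring (SUD m) 2 c" and S: "determining_set (SUD m) c S"
  shows "card S \<ge> m^4 - 3*m^2 + 3*m"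
proof -
  let ?V = "{1..m^2} \<times> {1..m^2}"
  have SV: "S \<subseteq> ?V" using S unfolding determining_set_def SUD_eq by auto
  have "?V - S \<subseteq> LR m c \<union> LC m c \<union> LB m c"
  proof
    fix v assume v: "v \<in> ?V - S"
    have "v \<in> fst (SUD m)" "v \<notin> S" using v unfolding SUD_eq by auto
    then obtain e where "e \<in> snd (SUD m)" "lonely c e v" using flip[OF m c S] by blast
    thus "v \<in> LR m c \<union> LC m c \<union> LB m c" using lonely_in_L[OF m] by blast
  qed
  hence "card (?V - S) \<le> 3*m^2 - 3*m" using Lall_bound[OF m twoc_of[OF c]]
    by (meson card_mono fin_LR finite_UnI le_trans)
  moreover have "card (?V - S) = m^4 - card S" using card_Diff_subset[OF _ SV] card_V finite_subset[OF SV] by auto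
  moreover have "card S \<le> m^4" using card_mono[OF _ SV] card_V by auto
  moreover have "3*m^2 \<le> m^4" using sq_ge[OF m] by (simp add: power2_eq_square power4_eq_xxxx)
  moreover have "3*m \<le> 3*m^2" by (simp add: power2_eq_square)
  ultimately show ?thesis by linarith
qed


lemma L0_unique: assumes m: "m \<ge> 3" and v: "v \<in> L0 m"
  shows "\<exists>e\<in>snd (SUD m). v \<in> e \<and> (\<forall>w\<in>e. w \<noteq> v \<longrightarrow> w \<notin> L0 m)"
proof -
  have m0: "m > 0" using m by auto
  obtain a b where ab: "v = (a,b)" by (cases v)
  have V: "a \<in> {1..m^2}" "b \<in> {1..m^2}" using v ab unfolding L0_def by auto
  have bls: "bl m a \<in> {1..m}" "bl m b \<in> {1..m}" using bl_range[OF m0] V by auto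
  consider (u) "bl m a = bl m b" "\<not> m dvd a" "m dvd b" | (w) "bl m a = bl m b" "m dvd a" "\<not> m dvd b"
    | (z) "m dvd a" "m dvd b" "bl m a \<noteq> bl m b"
    using v ab unfolding L0_def by auto
  thus ?thesis
  proof cases
    case u
    show ?thesis
    proof (intro bexI conjI ballI impI)
      show "rowE m a \<in> snd (SUD m)" using V unfolding SUD_eq by auto
      show "v \<in> rowE m a" using ab V by auto
      fix w assume w: "w \<in> rowE m a" "w \<noteq> v"
      show "w \<notin> L0 m"
      proof
        assume wL: "w \<in> L0 m"
        have "bl m (snd w) = bl m b" "m dvd snd w" "snd w \<ge> 1" using wL w u unfolding L0_def by auto
        hence "snd w = b" using bl_dvd_inj[OF m0 _ u(3)] V by auto
        thus False using w ab by (cases w) auto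
      qed
    qed
  next
    case w
    show ?thesis
    proof (intro bexI conjI ballI impI)
      show "colE m b \<in> snd (SUD m)" using V unfolding SUD_eq by auto
      show "v \<in> colE m b" using ab V by auto
      fix x assume x: "x \<in> colE m b" "x \<noteq> v"
      show "x \<notin> L0 m"
      proof
        assume xL: "x \<in> L0 m"
        have "bl m (fst x) = bl m a" "m dvd fst x" "fst x \<ge> 1" using xL x w unfolding L0_def by auto
        hence "fst x = a" using bl_dvd_inj[OF m0 _ w(2)] V by auto
        thus False using x ab by (cases x) auto
      qed
    qed
  next
    case z
    show ?thesis
    proof (intro bexI conjI ballI impI)
      show "blkE m (bl m a) (bl m b) \<in> snd (SUD m)" using bls unfolding SUD_eq by auto
      show "v \<in> blkE m (bl m a) (bl m b)" using ab V by auto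
      fix x assume x: "x \<in> blkE m (bl m a) (bl m b)" "x \<noteq> v"
      show "x \<notin> L0 m"
      proof
        assume xL: "x \<in> L0 m"
        have "m dvd fst x" "m dvd snd x" "fst x \<ge> 1" "snd x \<ge> 1" using xL x z unfolding L0_def by auto
        hence "fst x = a" "snd x = b" using bl_dvd_inj[OF m0 _ z(1)] bl_dvd_inj[OF m0 _ z(2)] V x by auto
        thus False using x ab by (cases x) auto
      qed
    qed
  qed
qed

definition S0 :: "nat \<Rightarrow> (nat\<times>nat) set" where "S0 m = {1..m^2} \<times> {1..m^2} - L0 m"

lemma S0_det: assumes m: "m \<ge> 3" shows "determining_set (SUD m) (c0 m) (S0 m)"
  unfolding determining_set_def
proof (intro conjI allI impI ballI)
  show "S0 m \<subseteq> fst (SUD m)" unfolding S0_def SUD_eq by auto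
next
  fix c' v assume h: "chi_colouring (SUD m) c' \<and> (\<forall>v\<in>S0 m. c' v = c0 m v)" and v: "v \<in> fst (SUD m)"
  have c': "is_colouring (SUD m) 2 c'" using h chi_col_iff[OF m] by auto
  show "c' v = c0 m v"
  proof (cases "v \<in> L0 m")
    case False thus ?thesis using h v unfolding S0_def SUD_eq by auto
  next
    case True
    obtain e where e: "e \<in> snd (SUD m)" "v \<in> e" "\<forall>w\<in>e. w \<noteq> v \<longrightarrow> w \<notin> L0 m" using L0_unique[OF m True] by auto
    have eV: "e \<subseteq> fst (SUD m)" using edge_sub[OF e(1)] m unfolding SUD_eq by auto
    have cv: "c' v \<in> {1..2}" using c' v unfolding is_colouring_def by auto
    show ?thesis
    proof (rule ccontr)
      assume "c' v \<noteq> c0 m v"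
      hence "c' v = 2" using True cv unfolding c0_def by auto
      moreover have "c' w = 2" if "w \<in> e" "w \<noteq> v" for w
        using h e that eV unfolding S0_def SUD_eq c0_def by auto
      ultimately have "\<forall>w\<in>e. c' w = 2" by metis
      thus False using c' e(1) unfolding is_colouring_def by blast
    qed
  qed
qed

lemma c0_lonely: assumes m: "m \<ge> 3" and e: "e \<in> snd (SUD m)" and l: "lonely (c0 m) e v" shows "v \<in> L0 m"
proof (rule ccontr)
  assume nv: "v \<notin> L0 m"
  obtain y1 y2 where y: "y1 \<in> e" "y2 \<in> e" "y1 \<noteq> y2" "y1 \<notin> L0 m" "y2 \<notin> L0 m" using edges_ok(2)[OF m e] by auto
  have "c0 m y1 \<noteq> c0 m v \<or> y1 = v" "c0 m y2 \<noteq> c0 m v \<or> y2 = v" using l y unfolding lonely_def by auto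
  thus False using y nv unfolding c0_def by auto
qed

lemma c0_critical_iff: assumes m: "m \<ge> 3" shows "critical_set (SUD m) (c0 m) S \<longleftrightarrow> S = S0 m"
proof -
  have sub: "S0 m \<subseteq> S" if dS: "determining_set (SUD m) (c0 m) S" for S
  proof
    fix v assume v: "v \<in> S0 m"
    show "v \<in> S"
    proof (rule ccontr)
      assume "v \<notin> S"
      moreover have "v \<in> fst (SUD m)" using v unfolding S0_def SUD_eq by auto
      ultimately obtain e where "e \<in> snd (SUD m)" "lonely (c0 m) e v"
        using flip[OF m c0_col[OF m] dS] by blast
      hence "v \<in> L0 m" using c0_lonely[OF m] by blast
      thus False using v unfolding S0_def by auto
    qed
  qed
  show ?thesis
  proof
    assume "critical_set (SUD m) (c0 m) S"
    hence d: "determining_set (SUD m) (c0 m) S" and mn: "\<forall>T. T \<subset> S \<longrightarrow> \<not> determining_set (SUD m) (c0 m) T"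
      unfolding critical_set_def by auto
    show "S = S0 m" using sub[OF d] mn S0_det[OF m] by blast
  next
    assume "S = S0 m"
    thus "critical_set (SUD m) (c0 m) S" unfolding critical_set_def using S0_det[OF m] sub by blast
  qed
qed


lemma card_L0: assumes m: "m \<ge> 3" shows "card (L0 m) \<ge> 3*m^2 - 3*m"
proof -
  have m0: "m > 0" using m by auto
  define f where "f = (\<lambda>p::nat\<times>nat. ((fst p - 1)*m + snd p, fst p * m))"
  define g where "g = (\<lambda>p::nat\<times>nat. (fst p * m, snd p * m))"
  define DU where "DU = {1..m} \<times> {1..m-1}"
  define DZ where "DZ = {p \<in> {1..m} \<times> {1..m}. fst p \<noteq> snd p}"
  define U0 where "U0 = f ` DU"
  define W0 where "W0 = prod.swap ` U0"
  define Z0 where "Z0 = g ` DZ"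
  have fin: "finite (L0 m)" unfolding L0_def by auto
  have fprop: "bl m (fst (f p)) = fst p \<and> fst (f p) \<in> {1..m^2} \<and> \<not> m dvd fst (f p) \<and>
      bl m (snd (f p)) = fst p \<and> snd (f p) \<in> {1..m^2} \<and> m dvd snd (f p)" if pD: "p \<in> DU" for p
  proof -
    obtain i k where p: "p = (i,k)" "i \<in> {1..m}" "k \<in> {1..m-1}" using pD unfolding DU_def by auto
    have e: "(i-1)*m + m = i*m" using jm p by auto
    have k: "1 \<le> k" "k \<le> m" "k \<noteq> m" using p m by auto
    have iI: "i \<in> {1..m}" using p by auto
    have A: "bl m ((i-1)*m+k) = i" "(i-1)*m+k \<in> {1..m^2}" "\<not> m dvd ((i-1)*m+k)"
      using locf[OF m iI k(1) k(2)] k(3) by auto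
    have B: "bl m (i*m) = i" "i*m \<in> {1..m^2}" "m dvd (i*m)"
      using locf[OF m iI, of m] m e iI by auto
    show ?thesis using A B p unfolding f_def by simp
  qed
  have gprop: "bl m (fst (g p)) = fst p \<and> fst (g p) \<in> {1..m^2} \<and> m dvd fst (g p) \<and>
      bl m (snd (g p)) = snd p \<and> snd (g p) \<in> {1..m^2} \<and> m dvd snd (g p)" if pD: "p \<in> DZ" for p
  proof -
    obtain i j where p: "p = (i,j)" "i \<in> {1..m}" "j \<in> {1..m}" using pD unfolding DZ_def by auto
    have e: "(i-1)*m + m = i*m" "(j-1)*m + m = j*m" using jm p by auto
    have iI: "i \<in> {1..m}" "j \<in> {1..m}" using p by auto
    have A: "bl m (i*m) = i" "i*m \<in> {1..m^2}" "m dvd (i*m)"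
      using locf[OF m iI(1), of m] m e iI by auto
    have B: "bl m (j*m) = j" "j*m \<in> {1..m^2}" "m dvd (j*m)"
      using locf[OF m iI(2), of m] m e iI by auto
    show ?thesis using A B p unfolding g_def by simp
  qed
  have U0L: "U0 \<subseteq> L0 m" unfolding U0_def L0_def using fprop by (auto simp: mem_Times_iff)
  have W0L: "W0 \<subseteq> L0 m" unfolding W0_def U0_def L0_def using fprop by (auto simp: mem_Times_iff)
  have Z0L: "Z0 \<subseteq> L0 m" unfolding Z0_def L0_def using gprop DZ_def by (auto simp: mem_Times_iff)
  have injf: "inj_on f DU"
  proof (rule inj_onI)
    fix p q assume pq: "p \<in> DU" "q \<in> DU" "f p = f q"
    hence "fst p * m = fst q * m" unfolding f_def by auto
    hence "fst p = fst q" using m0 by auto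
    thus "p = q" using pq unfolding f_def by (cases p, cases q) auto
  qed
  have injg: "inj_on g DZ" unfolding g_def inj_on_def using m0 by auto
  have cDU: "card DU = m*m - m" unfolding DU_def by (simp add: card_cartesian_product diff_mult_distrib2)
  have cDZ: "card DZ = m*m - m"
  proof -
    have "DZ = {1..m} \<times> {1..m} - (\<lambda>i. (i,i)) ` {1..m}" unfolding DZ_def by auto
    moreover have "card ((\<lambda>i. (i,i)) ` {1..m}) = m" by (simp add: card_image inj_on_def)
    ultimately show ?thesis by (simp add: card_Diff_subset card_cartesian_product image_subset_iff)
  qed
  have cU: "card U0 = m*m - m" unfolding U0_def using card_image[OF injf] cDU by simp
  have injsw: "inj_on prod.swap U0" unfolding inj_on_def by (metis swap_swap)
  have cW: "card W0 = m*m - m" unfolding W0_def using card_image[OF injsw] cU by simp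
  have cZ: "card Z0 = m*m - m" unfolding Z0_def using card_image[OF injg] cDZ by simp
  have Uc: "\<not> m dvd fst x" "m dvd snd x" if xU: "x \<in> U0" for x
  proof -
    obtain p where "p \<in> DU" "x = f p" using xU unfolding U0_def by blast
    thus "\<not> m dvd fst x" "m dvd snd x" using fprop by auto
  qed
  have Wc: "m dvd fst x" "\<not> m dvd snd x" if xW: "x \<in> W0" for x
  proof -
    obtain y where "y \<in> U0" "x = prod.swap y" using xW unfolding W0_def by blast
    thus "m dvd fst x" "\<not> m dvd snd x" using Uc by auto
  qed
  have Zc: "m dvd fst x" "m dvd snd x" if xZ: "x \<in> Z0" for x
  proof -
    obtain p where "p \<in> DZ" "x = g p" using xZ unfolding Z0_def by blast
    thus "m dvd fst x" "m dvd snd x" using gprop by auto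
  qed
  have d1: "U0 \<inter> W0 = {}" using Uc Wc by blast
  have d2: "(U0 \<union> W0) \<inter> Z0 = {}" using Uc Wc Zc by blast
  have fU: "finite U0" "finite W0" "finite Z0" unfolding U0_def W0_def Z0_def DU_def DZ_def by auto
  have "card (U0 \<union> W0 \<union> Z0) = 3*(m*m - m)"
    using card_Un_disjoint[OF _ _ d1] card_Un_disjoint[OF _ _ d2] fU cU cW cZ by simp
  moreover have "card (U0 \<union> W0 \<union> Z0) \<le> card (L0 m)" using U0L W0L Z0L fin by (intro card_mono) auto
  ultimately show ?thesis by (simp add: power2_eq_square diff_mult_distrib2)
qed


lemma V_det: "determining_set H c (fst H)"
  unfolding determining_set_def by auto

lemma det_sub: "determining_set H c S \<Longrightarrow> S \<subseteq> fst H"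
  unfolding determining_set_def by (elim conjE)

lemma crit_det: "critical_set H c S \<Longrightarrow> determining_set H c S"
  unfolding critical_set_def by (elim conjE)

lemma crit_exists: assumes fin: "finite (fst H)" shows "\<exists>S. critical_set H c S"
proof -
  define k where "k = (LEAST n. \<exists>S. determining_set H c S \<and> card S = n)"
  have "\<exists>S. determining_set H c S \<and> card S = k"
    unfolding k_def by (rule LeastI_ex) (use V_det in blast)
  then obtain S where S: "determining_set H c S" "card S = k" by auto
  have "critical_set H c S" unfolding critical_set_def
  proof (intro conjI allI impI notI)
    show "determining_set H c S" by fact
    fix T assume T: "T \<subset> S" "determining_set H c T"
    have "finite S" using S(1) fin unfolding determining_set_def by (auto intro: finite_subset)
    hence "card T < card S" using T(1) by (rule psubset_card_mono)
    moreover have "k \<le> card T" unfolding k_def by (rule Least_le) (use T in blast)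
    ultimately show False using S by simp
  qed
  thus ?thesis by blast
qed

lemma crit_bounds: assumes m: "m \<ge> 3" and c: "chi_colouring (SUD m) c"
  shows "m^4 - 3*m^2 + 3*m \<le> scs (SUD m) c" "scs (SUD m) c \<le> m^4"
        "m^4 - 3*m^2 + 3*m \<le> lcs (SUD m) c" "lcs (SUD m) c \<le> m^4"
proof -
  let ?X = "{card S | S. critical_set (SUD m) c S}"
  have c2: "is_colouring (SUD m) 2 c" using c chi_col_iff[OF m] by auto
  have finV: "finite (fst (SUD m))" unfolding SUD_eq by simp
  obtain S1 where "critical_set (SUD m) c S1" using crit_exists[OF finV] by blast
  hence ne: "?X \<noteq> {}" by auto
  have up: "x \<le> m^4" if xX: "x \<in> ?X" for x
  proof -
    obtain S where S: "x = card S" "critical_set (SUD m) c S" using xX by blast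
    hence "S \<subseteq> fst (SUD m)" by (intro det_sub crit_det) simp
    hence "S \<subseteq> {1..m^2} \<times> {1..m^2}" unfolding SUD_eq by simp
    hence "card S \<le> card ({1..m^2} \<times> {1..m^2})" by (intro card_mono) auto
    thus ?thesis using S card_V by simp
  qed
  have lo: "m^4 - 3*m^2 + 3*m \<le> x" if xX: "x \<in> ?X" for x
  proof -
    obtain S where S: "x = card S" "critical_set (SUD m) c S" using xX by blast
    hence "determining_set (SUD m) c S" by (intro crit_det) simp
    thus ?thesis using det_lower[OF m c2] S by simp
  qed
  have fin: "finite ?X" by (rule finite_subset[of _ "{..m^4}"]) (use up in auto)
  have mi: "Min ?X \<in> ?X" by (rule Min_in[OF fin ne])
  have ma: "Max ?X \<in> ?X" by (rule Max_in[OF fin ne])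
  show "m^4 - 3*m^2 + 3*m \<le> scs (SUD m) c" unfolding scs_def by (rule lo[OF mi])
  show "scs (SUD m) c \<le> m^4" unfolding scs_def by (rule up[OF mi])
  show "m^4 - 3*m^2 + 3*m \<le> lcs (SUD m) c" unfolding lcs_def by (rule lo[OF ma])
  show "lcs (SUD m) c \<le> m^4" unfolding lcs_def by (rule up[OF ma])
qed

lemma c0_values: assumes m: "m \<ge> 3"
  shows "scs (SUD m) (c0 m) = m^4 - 3*m^2 + 3*m" "lcs (SUD m) (c0 m) = m^4 - 3*m^2 + 3*m"
proof -
  have X: "{card S | S. critical_set (SUD m) (c0 m) S} = {card (S0 m)}" using c0_critical_iff[OF m] by auto
  have L0V: "L0 m \<subseteq> {1..m^2} \<times> {1..m^2}" unfolding L0_def by auto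
  have cS: "card (S0 m) = m^4 - card (L0 m)" unfolding S0_def
    using card_Diff_subset[OF finite_subset[OF L0V] L0V] card_V by auto
  have "card (S0 m) \<ge> m^4 - 3*m^2 + 3*m" using det_lower[OF m c0_col[OF m] S0_det[OF m]] .
  moreover have "card (S0 m) \<le> m^4 - 3*m^2 + 3*m"
  proof -
    have "3*m^2 \<le> m^4" using sq_ge[OF m] by (simp add: power2_eq_square power4_eq_xxxx)
    moreover have "3*m \<le> 3*m^2" by (simp add: power2_eq_square)
    ultimately show ?thesis using cS card_L0[OF m] by linarith
  qed
  ultimately have "card (S0 m) = m^4 - 3*m^2 + 3*m" by simp
  thus "scs (SUD m) (c0 m) = m^4 - 3*m^2 + 3*m" "lcs (SUD m) (c0 m) = m^4 - 3*m^2 + 3*m"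
    unfolding scs_def lcs_def X by auto
qed

theorem proposition7:
  fixes m :: nat
  assumes "m \<ge> 3"
  shows "sn (SUD m) = m^4 - 3*m^2 + 3*m \<and> lcs_lower (SUD m) = m^4 - 3*m^2 + 3*m"
proof
  have c0c: "chi_colouring (SUD m) (c0 m)" using chi_col_iff[OF assms] c0_col[OF assms] by auto
  have cb: "\<And>c. chi_colouring (SUD m) c \<Longrightarrow> m^4 - 3*m^2 + 3*m \<le> scs (SUD m) c \<and> scs (SUD m) c \<le> m^4
     \<and> m^4 - 3*m^2 + 3*m \<le> lcs (SUD m) c \<and> lcs (SUD m) c \<le> m^4"
    using crit_bounds[OF assms] by blast
  show "sn (SUD m) = m^4 - 3*m^2 + 3*m" unfolding sn_def
  proof (rule Min_eqI)
    show "finite {scs (SUD m) c |c. chi_colouring (SUD m) c}"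
    proof (rule finite_subset[of _ "{..m^4}"])
      show "{scs (SUD m) c |c. chi_colouring (SUD m) c} \<subseteq> {..m^4}" using cb by blast
    qed simp
    show "y \<in> {scs (SUD m) c |c. chi_colouring (SUD m) c} \<Longrightarrow> m^4 - 3*m^2 + 3*m \<le> y" for y
      using cb by blast
    show "m^4 - 3*m^2 + 3*m \<in> {scs (SUD m) c |c. chi_colouring (SUD m) c}"
      by (rule CollectI, rule exI[of _ "c0 m"]) (simp add: c0c c0_values[OF assms])
  qed
  show "lcs_lower (SUD m) = m^4 - 3*m^2 + 3*m" unfolding lcs_lower_def
  proof (rule Min_eqI)
    show "finite {lcs (SUD m) c |c. chi_colouring (SUD m) c}"
    proof (rule finite_subset[of _ "{..m^4}"])
      show "{lcs (SUD m) c |c. chi_colouring (SUD m) c} \<subseteq> {..m^4}" using cb by blast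
    qed simp
    show "y \<in> {lcs (SUD m) c |c. chi_colouring (SUD m) c} \<Longrightarrow> m^4 - 3*m^2 + 3*m \<le> y" for y
      using cb by blast
    show "m^4 - 3*m^2 + 3*m \<in> {lcs (SUD m) c |c. chi_colouring (SUD m) c}"
      by (rule CollectI, rule exI[of _ "c0 m"]) (simp add: c0c c0_values[OF assms])
  qed
qed


end
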